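(* Let $X^{2n}$ be a quasitoric manifold over a simple polytope $P^n$ and let $T^{n-1}\subset T^n$ be a subtorus such that the induced action of $T^{n-1}$ on $X^{2n}$ has connected stabilizers. Let \[ Z_{\mathrm{non}}=(Y_{\mathrm{non}}\times D^2)\cup(P^n\times\partial D^2)\subset \partial(P^n\times D^2)\cong S^{n+1}. \] Then $Z_{\mathrm{non}}$ is homotopy equivalent to the orbit space $Q^{n+1}=X^{2n}/T^{n-1}$.
   Context: For each facet $F$ of $P^n$, $\lambda(F)\in N=\mathrm{Hom}(T^1,T^n)\cong\mathbb{Z}^n$ is the primitive vector of the circle subgroup of $T^n$ stabilizing points of $X^{2n}$ over the interior of $F$. Let $\Pi\subset N$ be the image of $\mathrm{Hom}(T^1,T^{n-1})$. A facet $F$ is special if $\lambda(F)\in\Pi$; a proper face of $P^n$ is special if all facets containing it are special, and non-special otherwise. $Y_{\mathrm{non}}\subset\partial P^n$ is the union of all (closed) non-special faces. $D^2$ is the closed 2-disc. *)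

theory Defs
  imports "HOL-Analysis.Analysis"
begin

text \<open>Quotient of a topological space by a relation R (intended to be an equivalence
relation on the carrier): points are the equivalence classes, a set of classes is open
iff the union of its members is open.\<close>
definition quotient_topology :: "'a topology \<Rightarrow> ('a \<times> 'a) set \<Rightarrow> 'a set topology" where
  "quotient_topology X R = topology (\<lambda>U. U \<subseteq> topspace X // R \<and> openin X (\<Union>U))"

definition int_lattice :: "(real^'n) set" where
  "int_lattice = {v. \<forall>i. v $ i \<in> \<int>}"

definition torus :: "(complex^'n) set" where
  "torus = {z. \<forall>i. cmod (z $ i) = 1}"

definition tmul :: "complex^'n \<Rightarrow> complex^'n \<Rightarrow> complex^'n" where
  "tmul z w = (\<chi> i. z $ i * w $ i)"

text \<open>Exponential map R^n = Lie(T^n) \<rightarrow> T^n, with kernel Z^n.\<close>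
definition texp :: "real^'n \<Rightarrow> complex^'n" where
  "texp v = (\<chi> i. cis (2 * pi * v $ i))"

definition facets_at :: "(real^'n) set \<Rightarrow> real^'n \<Rightarrow> (real^'n) set set" where
  "facets_at P p = {F. F facet_of P \<and> p \<in> F}"

definition simple_polytope :: "(real^'n) set \<Rightarrow> bool" where
  "simple_polytope P \<longleftrightarrow> polytope P \<and> aff_dim P = int CARD('n) \<and>
     (\<forall>v. v extreme_point_of P \<longrightarrow> card (facets_at P v) = CARD('n))"

text \<open>Characteristic function: each facet gets an integer vector, and at every vertex
the vectors of the facets through it form a basis of Z^n (they generate Z^n as a group;
since there are n of them this is the basis condition, and it implies primitivity).\<close>
definition characteristic_function :: "(real^'n) set \<Rightarrow> ((real^'n) set \<Rightarrow> real^'n) \<Rightarrow> bool" where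
  "characteristic_function P lam \<longleftrightarrow>
     (\<forall>F. F facet_of P \<longrightarrow> lam F \<in> int_lattice) \<and>
     (\<forall>v. v extreme_point_of P \<longrightarrow>
        (\<forall>z \<in> int_lattice. \<exists>c :: (real^'n) set \<Rightarrow> int.
            z = (\<Sum>F \<in> facets_at P v. of_int (c F) *\<^sub>R lam F)))"

definition Tface :: "(real^'n) set \<Rightarrow> ((real^'n) set \<Rightarrow> real^'n) \<Rightarrow> real^'n \<Rightarrow> (complex^'n) set" where
  "Tface P lam p = texp ` span (lam ` facets_at P p)"

definition qt_rel :: "(real^'n) set \<Rightarrow> ((real^'n) set \<Rightarrow> real^'n)
    \<Rightarrow> (((real^'n) \<times> (complex^'n)) \<times> ((real^'n) \<times> (complex^'n))) set" where
  "qt_rel P lam = {((p, t), (q, s)). p \<in> P \<and> q \<in> P \<and> t \<in> torus \<and> s \<in> torus \<and>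
       p = q \<and> (\<exists>g \<in> Tface P lam p. t = tmul g s)}"

definition quasitoric :: "(real^'n) set \<Rightarrow> ((real^'n) set \<Rightarrow> real^'n)
    \<Rightarrow> ((real^'n) \<times> (complex^'n)) set topology" where
  "quasitoric P lam = quotient_topology
       (prod_topology (top_of_set P) (top_of_set torus)) (qt_rel P lam)"

definition qt_act :: "complex^'n \<Rightarrow> ((real^'n) \<times> (complex^'n)) set \<Rightarrow> ((real^'n) \<times> (complex^'n)) set" where
  "qt_act s c = (\<lambda>(p, t). (p, tmul s t)) ` c"

definition qt_stabilizer :: "(complex^'n) set \<Rightarrow> ((real^'n) \<times> (complex^'n)) set \<Rightarrow> (complex^'n) set" where
  "qt_stabilizer H c = {s \<in> H. qt_act s c = c}"

definition orbit_rel :: "(real^'n) set \<Rightarrow> ((real^'n) set \<Rightarrow> real^'n) \<Rightarrow> (complex^'n) set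
    \<Rightarrow> (((real^'n) \<times> (complex^'n)) set \<times> ((real^'n) \<times> (complex^'n)) set) set" where
  "orbit_rel P lam H = {(c, d). c \<in> topspace (quasitoric P lam) \<and> d \<in> topspace (quasitoric P lam) \<and>
       (\<exists>s \<in> H. d = qt_act s c)}"

definition orbit_space :: "(real^'n) set \<Rightarrow> ((real^'n) set \<Rightarrow> real^'n) \<Rightarrow> (complex^'n) set
    \<Rightarrow> ((real^'n) \<times> (complex^'n)) set set topology" where
  "orbit_space P lam H = quotient_topology (quasitoric P lam) (orbit_rel P lam H)"

text \<open>The subtorus T^{n-1} = texp V, where V = Lie(T^{n-1}) is a rational subspace of
dimension n-1; Pi = V \<inter> Z^n is the image of Hom(T^1,T^{n-1}) in N = Z^n.\<close>
definition rational_hyperplane :: "(real^'n) set \<Rightarrow> bool" where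
  "rational_hyperplane V \<longleftrightarrow> subspace V \<and> dim V = CARD('n) - 1 \<and>
      V = span (V \<inter> int_lattice)"

definition special_facet :: "(real^'n) set \<Rightarrow> ((real^'n) set \<Rightarrow> real^'n) \<Rightarrow> (real^'n) set \<Rightarrow> (real^'n) set \<Rightarrow> bool" where
  "special_facet P lam V F \<longleftrightarrow> F facet_of P \<and> lam F \<in> V \<inter> int_lattice"

definition special_face :: "(real^'n) set \<Rightarrow> ((real^'n) set \<Rightarrow> real^'n) \<Rightarrow> (real^'n) set \<Rightarrow> (real^'n) set \<Rightarrow> bool" where
  "special_face P lam V G \<longleftrightarrow> (\<forall>F. F facet_of P \<and> G \<subseteq> F \<longrightarrow> special_facet P lam V F)"

definition Y_non :: "(real^'n) set \<Rightarrow> ((real^'n) set \<Rightarrow> real^'n) \<Rightarrow> (real^'n) set \<Rightarrow> (real^'n) set" where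
  "Y_non P lam V = \<Union>{G. G face_of P \<and> G \<noteq> {} \<and> G \<noteq> P \<and> \<not> special_face P lam V G}"

definition Z_non :: "(real^'n) set \<Rightarrow> ((real^'n) set \<Rightarrow> real^'n) \<Rightarrow> (real^'n) set \<Rightarrow> ((real^'n) \<times> complex) set" where
  "Z_non P lam V = (Y_non P lam V \<times> cball 0 1) \<union> (P \<times> sphere 0 1)"

end

theory Submission imports Defs begin


lemma quot_top:
  assumes eq: "equiv (topspace X) R"
  shows "topspace (quotient_topology X R) = topspace X // R"
    and "quotient_map X (quotient_topology X R) (\<lambda>x. R``{x})"
proof -
  let ?A = "topspace X"
  define L where "L = (\<lambda>U. U \<subseteq> ?A // R \<and> openin X (\<Union>U))"
  have disj: "C = D \<or> C \<inter> D = {}" if "C \<in> ?A//R" "D \<in> ?A//R" for C D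
    using quotient_disj[OF eq that] .
  have ist: "istopology L"
  proof -
    have 1: "L (S \<inter> T)" if S: "L S" and T: "L T" for S T
    proof -
      have "\<Union>(S \<inter> T) = \<Union>S \<inter> \<Union>T"
      proof
        show "\<Union> S \<inter> \<Union> T \<subseteq> \<Union> (S \<inter> T)"
        proof
          fix x assume "x \<in> \<Union> S \<inter> \<Union> T"
          then obtain C D where "C \<in> S" "D \<in> T" "x \<in> C" "x \<in> D" by auto
          with S T disj[of C D] have "C = D" by (auto simp: L_def)
          with \<open>C \<in> S\<close> \<open>D \<in> T\<close> \<open>x \<in> C\<close> show "x \<in> \<Union> (S \<inter> T)" by auto
        qed
      qed auto
      with S T show ?thesis by (auto simp: L_def)
    qed
    have 2: "L (\<Union>K)" if K: "\<forall>S\<in>K. L S" for K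
    proof -
      have "\<Union>(\<Union>K) = \<Union>((\<lambda>S. \<Union>S) ` K)" by auto
      with K show ?thesis by (auto simp: L_def)
    qed
    show ?thesis unfolding istopology_def using 1 2 by blast
  qed
  have op: "openin (quotient_topology X R) = L"
    unfolding quotient_topology_def L_def[symmetric] using ist by (simp add: topology_inverse')
  have UA: "\<Union>(?A // R) = ?A" using Union_quotient[OF eq] .
  show ts: "topspace (quotient_topology X R) = ?A // R"
  proof -
    have "L (?A // R)" unfolding L_def using UA by simp
    moreover have "\<And>U. L U \<Longrightarrow> U \<subseteq> ?A // R" unfolding L_def by auto
    ultimately show ?thesis unfolding topspace_def op by blast
  qed
  show "quotient_map X (quotient_topology X R) (\<lambda>x. R``{x})"
    unfolding quotient_map_def
  proof (intro conjI allI impI)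
    show "(\<lambda>x. R `` {x}) ` ?A = topspace (quotient_topology X R)"
      unfolding ts quotient_def by auto
  next
    fix U assume U: "U \<subseteq> topspace (quotient_topology X R)"
    have "{x \<in> ?A. R `` {x} \<in> U} = \<Union>U"
    proof
      show "{x \<in> ?A. R `` {x} \<in> U} \<subseteq> \<Union> U"
        using eq by (auto simp: equiv_def refl_on_def)
    next
      show "\<Union> U \<subseteq> {x \<in> ?A. R `` {x} \<in> U}"
      proof
        fix x assume "x \<in> \<Union>U"
        then obtain C where C: "C \<in> U" "x \<in> C" by auto
        with U ts obtain y where y: "y \<in> ?A" "C = R``{y}" by (auto simp: quotient_def)
        then have "(y,x) \<in> R" using C by auto
        then have "R``{x} = R``{y}" using equiv_class_eq[OF eq] by (metis)
        moreover have "x \<in> ?A" using \<open>(y,x) \<in> R\<close> eq by (auto simp: equiv_def refl_on_def)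
        ultimately show "x \<in> {x \<in> ?A. R `` {x} \<in> U}" using C y by auto
      qed
    qed
    then show "openin X {x \<in> ?A. R `` {x} \<in> U} = openin (quotient_topology X R) U"
      using U unfolding op L_def ts by auto
  qed
qed

lemma lift_cont:
  assumes q: "quotient_map X Y q" and G: "continuous_map X Z G"
    and wd: "\<And>x y. x \<in> topspace X \<Longrightarrow> y \<in> topspace X \<Longrightarrow> q x = q y \<Longrightarrow> G x = G y"
  shows "continuous_map Y Z (\<lambda>w. G (SOME x. x \<in> topspace X \<and> q x = w))"
    and "\<And>x. x \<in> topspace X \<Longrightarrow> G (SOME y. y \<in> topspace X \<and> q y = q x) = G x"
proof -
  let ?g = "\<lambda>w. G (SOME x. x \<in> topspace X \<and> q x = w)"
  show eqn: "G (SOME y. y \<in> topspace X \<and> q y = q x) = G x" if "x \<in> topspace X" for x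
  proof -
    have "\<exists>y. y \<in> topspace X \<and> q y = q x" using that by blast
    then have "(SOME y. y \<in> topspace X \<and> q y = q x) \<in> topspace X \<and> q (SOME y. y \<in> topspace X \<and> q y = q x) = q x"
      by (rule someI_ex)
    then show ?thesis using wd that by blast
  qed
  have "continuous_map X Z (?g \<circ> q)"
    using G by (rule continuous_map_eq) (simp add: eqn)
  then show "continuous_map Y Z ?g" using continuous_compose_quotient_map[OF q] by blast
qed

lemma texp_nth: "texp v $ i = cis (2 * pi * v $ i)"
  by (simp add: texp_def)

lemma tmul_texp: "tmul (texp a) (texp b) = texp (a + b)"
  by (simp add: vec_eq_iff tmul_def texp_def cis_mult distrib_left)

lemma texp_torus: "texp v \<in> torus"
  by (simp add: torus_def texp_def)

lemma torus_texp: assumes "t \<in> torus" obtains a where "t = texp a"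
proof
  have "t $ i = cis (2 * pi * (\<chi> i. Arg (t $ i) / (2 * pi)) $ i)" for i
  proof -
    have n: "cmod (t $ i) = 1" using assms by (simp add: torus_def)
    then have "t $ i \<noteq> 0" by auto
    then have "cis (Arg (t $ i)) = sgn (t $ i)" by (rule cis_Arg)
    also have "\<dots> = t $ i" using n by (simp add: sgn_div_norm)
    finally show ?thesis by simp
  qed
  then show "t = texp (\<chi> i. Arg (t $ i) / (2 * pi))"
    by (simp add: vec_eq_iff texp_nth)
qed

lemma torus_eq: "torus = range texp"
  using texp_torus torus_texp by blast



lemma texp_cong: "texp x = texp y \<Longrightarrow> texp (z + x) = texp (z + y)"
  by (metis tmul_texp)

lemma qt_rel_texp:
  "((p, texp a), (q, texp b)) \<in> qt_rel P lam \<longleftrightarrow>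
     p \<in> P \<and> q = p \<and> (\<exists>w\<in>span (lam ` facets_at P p). texp a = texp (w + b))"
  by (auto simp: qt_rel_def Tface_def tmul_texp texp_torus)

lemma qt_rel_sub: "qt_rel P lam \<subseteq> (P \<times> (torus :: (complex^'n) set)) \<times> (P \<times> torus)"
  by (auto simp: qt_rel_def)

lemma equiv_qt: "equiv (P \<times> (torus :: (complex^'n) set)) (qt_rel P lam)"
proof (rule equivI)
  show "refl_on (P \<times> torus) (qt_rel P lam)"
  proof (rule refl_onI)
    fix x assume "x \<in> P \<times> (torus :: (complex^'n) set)"
    then obtain p a where "x = (p, texp a)" "p \<in> P" using torus_texp by (metis SigmaE)
    then show "(x, x) \<in> qt_rel P lam"
      by (auto simp: qt_rel_texp intro!: bexI[of _ 0] span_zero)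
  qed
  show "sym (qt_rel P lam)"
  proof (rule symI)
    fix x y assume xy: "(x, y) \<in> qt_rel P lam"
    then have "x \<in> P \<times> torus" "y \<in> P \<times> torus" using qt_rel_sub by blast+
    then obtain p a q b where xy': "x = (p, texp a)" "y = (q, texp b)" using torus_texp by (metis SigmaE)
    with xy obtain w where w: "p \<in> P" "q = p" "w \<in> span (lam ` facets_at P p)" "texp a = texp (w + b)"
      by (auto simp: qt_rel_texp)
    have "texp (-w + a) = texp (-w + (w + b))" using texp_cong[OF w(4)] .
    then have "texp b = texp (-w + a)" by simp
    moreover have "-w \<in> span (lam ` facets_at P p)" using w(3) by (simp add: span_neg)
    ultimately have "((p, texp b), (p, texp a)) \<in> qt_rel P lam" using w(1) unfolding qt_rel_texp by blast
    then show "(y, x) \<in> qt_rel P lam" using xy' w(2) by simp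
  qed
  show "trans (qt_rel P lam)"
  proof (rule transI)
    fix x y z assume xy: "(x, y) \<in> qt_rel P lam" and yz: "(y, z) \<in> qt_rel P lam"
    then have "x \<in> P \<times> torus" "y \<in> P \<times> torus" "z \<in> P \<times> torus" using qt_rel_sub by blast+
    then obtain p a q b r c where xyz: "x = (p, texp a)" "y = (q, texp b)" "z = (r, texp c)"
      using torus_texp by (metis SigmaE)
    with xy obtain w where w: "p \<in> P" "q = p" "w \<in> span (lam ` facets_at P p)" "texp a = texp (w + b)"
      by (auto simp: qt_rel_texp)
    with yz xyz obtain w2 where w2: "r = p" "w2 \<in> span (lam ` facets_at P p)" "texp b = texp (w2 + c)"
      by (auto simp: qt_rel_texp)
    have "texp a = texp ((w + w2) + c)" using w(4) texp_cong[OF w2(3), of w] by (simp add: add.assoc)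
    moreover have "w + w2 \<in> span (lam ` facets_at P p)" using w(3) w2(2) by (simp add: span_add)
    ultimately show "(x, z) \<in> qt_rel P lam" using xyz w w2 by (auto simp: qt_rel_texp)
  qed
qed (use qt_rel_sub in blast)

lemma qt_class:
  assumes "p \<in> P"
  shows "qt_rel P lam `` {(p, texp a)} =
    {(p, texp b) | b. \<exists>w\<in>span (lam ` facets_at P p). texp a = texp (w + b)}"
proof (intro equalityI subsetI)
  fix y assume y: "y \<in> qt_rel P lam `` {(p, texp a)}"
  then have "y \<in> P \<times> torus" using qt_rel_sub by blast
  then obtain q b where qb: "y = (q, texp b)" using torus_texp by (metis SigmaE)
  with y show "y \<in> {(p, texp b) | b. \<exists>w\<in>span (lam ` facets_at P p). texp a = texp (w + b)}"
    by (auto simp: qt_rel_texp)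
qed (use assms in \<open>auto simp: qt_rel_texp\<close>)

lemma qt_act_class:
  assumes "p \<in> P"
  shows "qt_act (texp v) (qt_rel P lam `` {(p, texp a)}) = qt_rel P lam `` {(p, texp (v + a))}"
proof -
  let ?S = "span (lam ` facets_at P p)"
  have "qt_act (texp v) (qt_rel P lam `` {(p, texp a)}) =
    (\<lambda>(p, t). (p, tmul (texp v) t)) ` {(p, texp b) | b. \<exists>w\<in>?S. texp a = texp (w + b)}"
    unfolding qt_act_def qt_class[OF assms] ..
  also have "\<dots> = {(p, texp b) | b. \<exists>w\<in>?S. texp (v + a) = texp (w + b)}"
  proof (intro equalityI subsetI)
    fix x assume "x \<in> (\<lambda>(p, t). (p, tmul (texp v) t)) ` {(p, texp b) | b. \<exists>w\<in>?S. texp a = texp (w + b)}"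
    then obtain b w where bw: "x = (p, texp (v + b))" "w \<in> ?S" "texp a = texp (w + b)"
      by (auto simp: tmul_texp)
    have "texp (v + a) = texp (w + (v + b))" using texp_cong[OF bw(3), of v] by (simp add: algebra_simps)
    then show "x \<in> {(p, texp b) | b. \<exists>w\<in>?S. texp (v + a) = texp (w + b)}" using bw by blast
  next
    fix x assume "x \<in> {(p, texp b) | b. \<exists>w\<in>?S. texp (v + a) = texp (w + b)}"
    then obtain b w where bw: "x = (p, texp b)" "w \<in> ?S" "texp (v + a) = texp (w + b)" by blast
    have "texp a = texp (w + (-v + b))" using texp_cong[OF bw(3), of "-v"] by (simp add: algebra_simps)
    moreover have "x = (p, tmul (texp v) (texp (-v + b)))" using bw by (simp add: tmul_texp)
    ultimately show "x \<in> (\<lambda>(p, t). (p, tmul (texp v) t)) ` {(p, texp b) | b. \<exists>w\<in>?S. texp a = texp (w + b)}"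
      using bw by (auto intro!: image_eqI)
  qed
  also have "\<dots> = qt_rel P lam `` {(p, texp (v + a))}"
    unfolding qt_class[OF assms] ..
  finally show ?thesis .
qed

lemma topspace_qt: "topspace (quasitoric P lam) = (P \<times> (torus :: (complex^'n) set)) // qt_rel P lam"
proof -
  have "equiv (topspace (top_of_set (P \<times> (torus :: (complex^'n) set)))) (qt_rel P lam)"
    using equiv_qt by simp
  from quot_top(1)[OF this] show ?thesis unfolding quasitoric_def prod_topology_subtopology_eu by simp
qed

lemma quotient_qt: "quotient_map (top_of_set (P \<times> (torus :: (complex^'n) set))) (quasitoric P lam) (\<lambda>x. qt_rel P lam `` {x})"
proof -
  have "equiv (topspace (top_of_set (P \<times> (torus :: (complex^'n) set)))) (qt_rel P lam)"
    using equiv_qt by simp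
  from quot_top(2)[OF this] show ?thesis unfolding quasitoric_def prod_topology_subtopology_eu by simp
qed

lemma qt_elem:
  assumes "c \<in> topspace (quasitoric P lam)"
  obtains p a where "p \<in> P" "c = qt_rel P lam `` {(p, texp a)}"
  using assms unfolding topspace_qt quotient_def torus_eq by auto

lemma qt_class_in: "p \<in> P \<Longrightarrow> qt_rel P lam `` {(p, texp a)} \<in> topspace (quasitoric P lam)"
  unfolding topspace_qt quotient_def using texp_torus by blast

context
  fixes P :: "(real^'n) set" and lam :: "(real^'n) set \<Rightarrow> real^'n" and V :: "(real^'n) set"
  assumes V: "subspace V"
begin

lemma equiv_orbit: "equiv (topspace (quasitoric P lam)) (orbit_rel P lam (texp ` V))"
proof (rule equivI)
  show "refl_on (topspace (quasitoric P lam)) (orbit_rel P lam (texp ` V))"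
  proof (rule refl_onI)
    fix c assume "c \<in> topspace (quasitoric P lam)"
    then obtain p a where pa: "p \<in> P" "c = qt_rel P lam `` {(p, texp a)}" by (rule qt_elem)
    have "c = qt_act (texp 0) c" using qt_act_class[OF pa(1), where v=0 and a=a] pa by simp
    then show "(c, c) \<in> orbit_rel P lam (texp ` V)"
      using \<open>c \<in> _\<close> V by (auto simp: orbit_rel_def subspace_0 intro!: bexI[of _ "texp 0"])
  qed
  show "sym (orbit_rel P lam (texp ` V))"
  proof (rule symI)
    fix c d assume cd: "(c, d) \<in> orbit_rel P lam (texp ` V)"
    then obtain v where v: "c \<in> topspace (quasitoric P lam)" "d \<in> topspace (quasitoric P lam)" "v \<in> V" "d = qt_act (texp v) c"
      by (auto simp: orbit_rel_def)
    then obtain p a where pa: "p \<in> P" "c = qt_rel P lam `` {(p, texp a)}" by (metis qt_elem)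
    have "qt_act (texp (-v)) d = c" using v(4) pa qt_act_class[OF pa(1)] by simp
    moreover have "-v \<in> V" using V v(3) by (simp add: subspace_neg)
    ultimately show "(d, c) \<in> orbit_rel P lam (texp ` V)" using v by (auto simp: orbit_rel_def)
  qed
  show "trans (orbit_rel P lam (texp ` V))"
  proof (rule transI)
    fix c d e assume cd: "(c, d) \<in> orbit_rel P lam (texp ` V)" and de: "(d, e) \<in> orbit_rel P lam (texp ` V)"
    then obtain v w where v: "c \<in> topspace (quasitoric P lam)" "e \<in> topspace (quasitoric P lam)" "v \<in> V" "d = qt_act (texp v) c"
      "w \<in> V" "e = qt_act (texp w) d"
      by (auto simp: orbit_rel_def)
    then obtain p a where pa: "p \<in> P" "c = qt_rel P lam `` {(p, texp a)}" by (metis qt_elem)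
    have "e = qt_act (texp (w + v)) c" using v pa qt_act_class[OF pa(1)] by (simp add: add.assoc)
    moreover have "w + v \<in> V" using V v by (simp add: subspace_add)
    ultimately show "(c, e) \<in> orbit_rel P lam (texp ` V)" using v by (auto simp: orbit_rel_def)
  qed
qed (auto simp: orbit_rel_def)

definition "qq x = orbit_rel P lam (texp ` V) `` {qt_rel P lam `` {x}}"

lemma topspace_orb: "topspace (orbit_space P lam (texp ` V)) = topspace (quasitoric P lam) // orbit_rel P lam (texp ` V)"
  unfolding orbit_space_def using quot_top(1)[OF equiv_orbit] .

lemma quotient_qq: "quotient_map (top_of_set (P \<times> (torus :: (complex^'n) set))) (orbit_space P lam (texp ` V)) qq"
proof -
  have "quotient_map (top_of_set (P \<times> torus)) (orbit_space P lam (texp ` V))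
     ((\<lambda>c. orbit_rel P lam (texp ` V) `` {c}) \<circ> (\<lambda>x. qt_rel P lam `` {x}))"
    unfolding orbit_space_def
    by (rule quotient_map_compose[OF quotient_qt quot_top(2)[OF equiv_orbit]])
  then show ?thesis by (simp add: qq_def[abs_def] comp_def)
qed

lemma qq_orbit:
  assumes "p \<in> P" "v \<in> V"
  shows "qq (p, texp (v + a)) = qq (p, texp a)"
proof -
  have "(qt_rel P lam `` {(p, texp a)}, qt_rel P lam `` {(p, texp (v + a))}) \<in> orbit_rel P lam (texp ` V)"
    using assms qt_act_class[OF assms(1), where v=v and a=a] qt_class_in[OF assms(1)]
    by (auto simp: orbit_rel_def)
  then show ?thesis unfolding qq_def
    by (metis equiv_class_eq[OF equiv_orbit])
qed

lemma qq_face: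
  assumes "p \<in> P" "w \<in> span (lam ` facets_at P p)"
  shows "qq (p, texp (w + a)) = qq (p, texp a)"
proof -
  have "((p, texp (w + a)), (p, texp a)) \<in> qt_rel P lam"
    using assms by (auto simp: qt_rel_texp)
  then have "qt_rel P lam `` {(p, texp (w + a))} = qt_rel P lam `` {(p, texp a)}"
    by (rule equiv_class_eq[OF equiv_qt])
  then show ?thesis by (simp add: qq_def)
qed

lemma qq_inv:
  assumes "p \<in> P" "p' \<in> P" "qq (p, texp a) = qq (p', texp b)"
  shows "p' = p \<and> (\<exists>v\<in>V. \<exists>w\<in>span (lam ` facets_at P p). texp b = texp (w + (v + a)))"
proof -
  have "(qt_rel P lam `` {(p, texp a)}, qt_rel P lam `` {(p', texp b)}) \<in> orbit_rel P lam (texp ` V)"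
    using assms(3) unfolding qq_def
    by (rule eq_equiv_class[OF _ equiv_orbit qt_class_in[OF assms(2)]])
  then obtain v where v: "v \<in> V" "qt_rel P lam `` {(p', texp b)} = qt_act (texp v) (qt_rel P lam `` {(p, texp a)})"
    by (auto simp: orbit_rel_def)
  then have "qt_rel P lam `` {(p', texp b)} = qt_rel P lam `` {(p, texp (v + a))}"
    using qt_act_class[OF assms(1)] by simp
  then have "((p', texp b), (p, texp (v + a))) \<in> qt_rel P lam"
    by (rule eq_equiv_class[OF _ equiv_qt]) (use assms(1) texp_torus in auto)
  then show ?thesis using v(1) by (auto simp: qt_rel_texp)
qed

end

lemma int_lattice_iff: "v \<in> int_lattice \<longleftrightarrow> (\<forall>i. v $ i \<in> \<int>)"
  by (simp add: int_lattice_def)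

lemma int_lattice_add: "x \<in> int_lattice \<Longrightarrow> y \<in> int_lattice \<Longrightarrow> x + y \<in> int_lattice"
  by (simp add: int_lattice_def Ints_add)

lemma int_lattice_diff: "x \<in> int_lattice \<Longrightarrow> y \<in> int_lattice \<Longrightarrow> x - y \<in> int_lattice"
  by (simp add: int_lattice_def Ints_diff)

lemma int_lattice_scale: "x \<in> int_lattice \<Longrightarrow> of_int k *\<^sub>R x \<in> int_lattice"
  by (simp add: int_lattice_def Ints_mult)

lemma int_lattice_axis: "axis i 1 \<in> int_lattice"
  by (simp add: int_lattice_def axis_def)

lemma int_lattice_inner: "a \<in> int_lattice \<Longrightarrow> z \<in> int_lattice \<Longrightarrow> a \<bullet> z \<in> \<int>"
  by (auto simp: int_lattice_def inner_vec_def intro!: Ints_sum Ints_mult)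

lemma det_Ints:
  fixes A :: "real^'n^'n"
  assumes "\<And>i j. A $ i $ j \<in> \<int>"
  shows "det A \<in> \<int>"
  unfolding det_def using assms
  by (auto intro!: Ints_sum Ints_mult Ints_prod)

lemma normal_exists:
  fixes V :: "(real^'n) set"
  assumes "rational_hyperplane V"
  obtains c u where "c \<in> int_lattice" "u \<in> int_lattice" "c \<bullet> u = 1" "V = {v. c \<bullet> v = 0}"
proof -
  have V: "subspace V" "dim V = CARD('n) - 1" "V = span (V \<inter> int_lattice)"
    using assms by (auto simp: rational_hyperplane_def)
  obtain B where B: "B \<subseteq> V \<inter> int_lattice" "independent B" "V \<inter> int_lattice \<subseteq> span B"
    by (rule maximal_independent_subset)
  have spanB: "span B = V"
  proof
    show "span B \<subseteq> V" using B(1) V(1) by (simp add: span_minimal)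
    have "span (V \<inter> int_lattice) \<subseteq> span B" using B(3) by (simp add: span_minimal)
    then show "V \<subseteq> span B" using V(3) by simp
  qed
  have finB: "finite B" using B(2) by (rule independent_imp_finite)
  have cardB: "card B = CARD('n) - 1"
    using dim_span_eq_card_independent[OF B(2)] spanB V(2) by simp
  obtain e where e: "e \<in> int_lattice" "e \<notin> V"
  proof (rule ccontr)
    assume "\<not> thesis"
    with that have ax: "axis i 1 \<in> V" for i using int_lattice_axis by blast
    have "x \<in> V" for x
    proof -
      have "(\<Sum>i\<in>UNIV. x $ i *s axis i 1) \<in> V"
        using ax V(1) by (auto simp: scalar_mult_eq_scaleR intro!: subspace_sum subspace_scale)
      then show ?thesis by (simp add: basis_expansion)
    qed
    then have "V = UNIV" by auto
    then have "dim V = CARD('n)" by simp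
    with V(2) show False by (metis One_nat_def Suc_pred diff_Suc_1 n_not_Suc_n zero_less_card_finite)
  qed
  obtain i0 :: 'n where True by blast
  have "card (UNIV - {i0}) = card B" using cardB by (simp add: card_Diff_singleton)
  then obtain \<beta> where bij: "bij_betw \<beta> (UNIV - {i0}) B"
    using finite_same_card_bij[of "UNIV - {i0}" B] finB by auto
  define M :: "real^'n \<Rightarrow> real^'n^'n" where "M x = (\<chi> i. if i = i0 then x else \<beta> i)" for x
  define \<phi> where "\<phi> x = det (M x)" for x
  define a where "a = (\<chi> j. \<phi> (axis j 1))"
  have phi_lin: "\<phi> x = a \<bullet> x" for x
  proof -
    have "\<phi> x = det (\<chi> i. if i = i0 then (\<Sum>j\<in>UNIV. x $ j *s axis j 1) else \<beta> i)"
      by (simp only: \<phi>_def M_def basis_expansion)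
    also have "\<dots> = (\<Sum>j\<in>UNIV. det (\<chi> i. if i = i0 then x $ j *s axis j 1 else \<beta> i))"
      by (rule det_linear_row_sum) simp
    also have "\<dots> = (\<Sum>j\<in>UNIV. x $ j * \<phi> (axis j 1))"
      by (simp add: det_row_mul \<phi>_def M_def)
    also have "\<dots> = a \<bullet> x" by (simp add: a_def inner_vec_def mult.commute)
    finally show ?thesis .
  qed
  have betaB: "\<beta> i \<in> B" if "i \<noteq> i0" for i using bij that by (auto simp: bij_betw_def)
  have a_int: "a \<in> int_lattice"
    unfolding int_lattice_iff
  proof
    fix j
    show "a $ j \<in> \<int>" unfolding a_def \<phi>_def M_def vec_lambda_beta
    proof (intro det_Ints)
      fix i k
      have "\<beta> i $ k \<in> \<int>" if "i \<noteq> i0" using betaB[OF that] B(1) by (auto simp: int_lattice_def)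
      then show "(\<chi> i. if i = i0 then axis j 1 else \<beta> i) $ i $ k \<in> \<int>" by (auto simp: axis_def)
    qed
  qed
  have phiB: "a \<bullet> b = 0" if bB: "b \<in> B" for b
  proof -
    obtain j where j: "j \<in> UNIV - {i0}" "b = \<beta> j" using bij bB by (auto simp: bij_betw_def)
    have "det (M b) = 0"
      by (rule det_identical_rows[of i0 j]) (use j in \<open>auto simp: M_def row_def vec_eq_iff\<close>)
    then show ?thesis using phi_lin \<phi>_def by metis
  qed
  have VW: "V \<subseteq> {v. a \<bullet> v = 0}"
  proof -
    have "span B \<subseteq> {v. a \<bullet> v = 0}" using phiB by (intro span_minimal subspace_hyperplane) auto
    then show ?thesis using spanB by simp
  qed
  have eB: "e \<notin> B" using e B(1) by auto
  have phie: "\<phi> e \<noteq> 0"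
  proof
    assume "\<phi> e = 0"
    then have "\<not> invertible (M e)" using invertible_det_nz \<phi>_def by metis
    then obtain c i where c: "(\<Sum>i\<in>UNIV. c i *s row i (M e)) = 0" "c i \<noteq> 0"
      unfolding invertible_right_inverse matrix_right_invertible_independent_rows by blast
    define u where "u v = (if v = e then c i0 else c (inv_into (UNIV - {i0}) \<beta> v))" for v
    have "(\<Sum>v\<in>insert e B. u v *\<^sub>R v) = u e *\<^sub>R e + (\<Sum>v\<in>B. u v *\<^sub>R v)"
      using finB eB by simp
    also have "(\<Sum>v\<in>B. u v *\<^sub>R v) = (\<Sum>j\<in>UNIV - {i0}. u (\<beta> j) *\<^sub>R \<beta> j)"
      using sum.reindex_bij_betw[OF bij, of "\<lambda>v. u v *\<^sub>R v"] by simp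
    also have "\<dots> = (\<Sum>j\<in>UNIV - {i0}. c j *s row j (M e))"
    proof (rule sum.cong)
      fix j assume j: "j \<in> UNIV - {i0}"
      then have "\<beta> j \<noteq> e" using betaB eB by auto
      moreover have "inv_into (UNIV - {i0}) \<beta> (\<beta> j) = j"
        using bij j by (simp add: bij_betw_def inv_into_f_f)
      ultimately show "u (\<beta> j) *\<^sub>R \<beta> j = c j *s row j (M e)"
        using j by (simp add: u_def M_def row_def scalar_mult_eq_scaleR vec_lambda_eta)
    qed simp
    also have "u e *\<^sub>R e = c i0 *s row i0 (M e)"
      by (simp add: u_def M_def row_def scalar_mult_eq_scaleR vec_eq_iff)
    finally have "(\<Sum>v\<in>insert e B. u v *\<^sub>R v) = (\<Sum>i\<in>UNIV. c i *s row i (M e))"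
      by (simp add: sum.remove[of UNIV i0])
    then have s0: "(\<Sum>v\<in>insert e B. u v *\<^sub>R v) = 0" using c(1) by simp
    have "\<exists>v\<in>insert e B. u v \<noteq> 0"
    proof (cases "i = i0")
      case True then show ?thesis using c(2) by (auto simp: u_def)
    next
      case False
      then have "\<beta> i \<in> B" "\<beta> i \<noteq> e" using betaB eB by auto
      moreover have "inv_into (UNIV - {i0}) \<beta> (\<beta> i) = i"
        using bij False by (simp add: bij_betw_def inv_into_f_f)
      ultimately show ?thesis using c(2) by (auto simp: u_def intro!: bexI[of _ "\<beta> i"])
    qed
    then have "dependent (insert e B)" using s0 dependent_finite[of "insert e B"] finB by auto
    moreover have "independent (insert e B)"
      using independent_insertI[of e B] B(2) e(2) spanB by simp
    ultimately show False by simp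
  qed
  have a0: "a \<noteq> 0" using phie phi_lin by auto
  have VW': "V = {v. a \<bullet> v = 0}"
  proof (rule subspace_dim_equal[OF V(1) subspace_hyperplane VW])
    show "dim {v. a \<bullet> v = 0} \<le> dim V" using dim_hyperplane[OF a0] V(2) by simp
  qed
  define G where "G = {k::int. \<exists>z\<in>int_lattice. a \<bullet> z = of_int k}"
  have Gsub: "k - m * l \<in> G" if kl: "k \<in> G" "l \<in> G" for k l m
  proof -
    obtain z w where "z \<in> int_lattice" "a \<bullet> z = of_int k" "w \<in> int_lattice" "a \<bullet> w = of_int l"
      using kl by (auto simp: G_def)
    then show ?thesis unfolding G_def
      by (intro CollectI bexI[of _ "z - of_int m *\<^sub>R w"]) (auto intro!: int_lattice_diff int_lattice_scale simp: inner_diff_right)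
  qed
  obtain k0 where k0: "a \<bullet> e = of_int k0" using int_lattice_inner[OF a_int e(1)] Ints_cases by metis
  have k0G: "k0 \<in> G" using k0 e(1) by (auto simp: G_def)
  have k0nz: "k0 \<noteq> 0" using k0 phie phi_lin by auto
  have G0: "0 \<in> G" unfolding G_def by (rule CollectI, rule bexI[of _ 0]) (auto simp: int_lattice_def)
  have absG: "\<bar>k0\<bar> \<in> G"
  proof (cases "k0 \<ge> 0")
    case True then show ?thesis using k0G by simp
  next
    case False
    have "0 - 1 * k0 \<in> G" by (rule Gsub[OF G0 k0G])
    then show ?thesis using False by simp
  qed
  have ex: "\<exists>m::nat. m > 0 \<and> int m \<in> G"
    using absG k0nz by (intro exI[of _ "nat \<bar>k0\<bar>"]) auto
  define d where "d = (LEAST m::nat. m > 0 \<and> int m \<in> G)"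
  have d: "d > 0" "int d \<in> G" using LeastI_ex[OF ex] by (auto simp: d_def)
  have dmin: "\<not> (m > 0 \<and> int m \<in> G)" if "m < d" for m
    using not_less_Least[of m "\<lambda>m. m > 0 \<and> int m \<in> G"] that by (simp add: d_def)
  have ddvd: "int d dvd k" if kG: "k \<in> G" for k
  proof -
    have r: "k mod int d \<in> G" using Gsub[OF kG d(2), of "k div int d"] by (simp only: minus_div_mult_eq_mod)
    have ge: "k mod int d \<ge> 0" and lt: "k mod int d < int d" using d(1) by auto
    have "k mod int d = 0"
    proof (rule ccontr)
      assume "k mod int d \<noteq> 0"
      then have "nat (k mod int d) > 0" "nat (k mod int d) < d" "int (nat (k mod int d)) \<in> G"
        using ge lt r by auto
      then show False using dmin by blast
    qed
    then show ?thesis by (simp add: dvd_eq_mod_eq_0)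
  qed
  obtain u where u: "u \<in> int_lattice" "a \<bullet> u = of_int (int d)" using d(2) by (auto simp: G_def)
  define c where "c = (1 / real d) *\<^sub>R a"
  show ?thesis
  proof
    show "c \<in> int_lattice" unfolding int_lattice_iff
    proof
      fix j
      obtain k where k: "a $ j = of_int k" using a_int by (auto simp: int_lattice_def elim!: Ints_cases)
      have "a \<bullet> axis j 1 = a $ j" by (simp add: inner_axis)
      then have "k \<in> G" using k int_lattice_axis by (auto simp: G_def)
      then obtain m where "k = int d * m" using ddvd by (auto elim!: dvdE)
      then have "c $ j = of_int m" using k d(1) by (simp add: c_def)
      then show "c $ j \<in> \<int>" by simp
    qed
    show "u \<in> int_lattice" by (rule u(1))
    show "c \<bullet> u = 1" using u(2) d(1) by (simp add: c_def)
    show "V = {v. c \<bullet> v = 0}" using VW' d(1) by (simp add: c_def)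
  qed
qed

definition chi :: "real^'n \<Rightarrow> complex^'n \<Rightarrow> complex" where
  "chi c t = (\<Prod>i\<in>UNIV. (t $ i) powi \<lfloor>c $ i\<rfloor>)"

definition sec :: "real^'n \<Rightarrow> complex \<Rightarrow> complex^'n" where
  "sec u z = (\<chi> i. z powi \<lfloor>u $ i\<rfloor>)"

lemma prod_cis: "finite S \<Longrightarrow> (\<Prod>i\<in>S. cis (f i)) = cis (\<Sum>i\<in>S. f i)"
  by (induction S rule: finite_induct) (auto simp: cis_mult)

lemma floor_Ints: "x \<in> \<int> \<Longrightarrow> real_of_int \<lfloor>x\<rfloor> = x"
  by (metis Ints_cases floor_of_int)

lemma chi_texp:
  assumes "c \<in> int_lattice"
  shows "chi c (texp v) = cis (2 * pi * (c \<bullet> v))"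
proof -
  have "chi c (texp v) = (\<Prod>i\<in>UNIV. cis (c $ i * (2 * pi * v $ i)))"
    unfolding chi_def texp_nth cis_power_int
    using assms by (simp add: int_lattice_def floor_Ints)
  also have "\<dots> = cis (\<Sum>i\<in>UNIV. c $ i * (2 * pi * v $ i))" by (simp add: prod_cis)
  also have "(\<Sum>i\<in>UNIV. c $ i * (2 * pi * v $ i)) = 2 * pi * (c \<bullet> v)"
    by (simp add: inner_vec_def sum_distrib_left algebra_simps)
  finally show ?thesis .
qed

lemma sec_cis:
  assumes "u \<in> int_lattice"
  shows "sec u (cis (2 * pi * r)) = texp (r *\<^sub>R u)"
  unfolding sec_def texp_def using assms
  by (simp add: cis_power_int int_lattice_def floor_Ints vec_eq_iff algebra_simps)

lemma sphere_cis:
  assumes "z \<in> sphere (0::complex) 1"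
  obtains r where "z = cis (2 * pi * r)"
proof
  have "z \<noteq> 0" using assms by auto
  then have "cis (Arg z) = sgn z" by (rule cis_Arg)
  also have "\<dots> = z" using assms by (simp add: sgn_div_norm)
  finally show "z = cis (2 * pi * (Arg z / (2 * pi)))" by simp
qed

lemma chi_mult:
  assumes "c \<in> int_lattice"
  shows "chi c (texp (a + b)) = chi c (texp a) * chi c (texp b)"
  using assms by (simp add: chi_texp cis_mult inner_add_right distrib_left)

lemma chi_torus: "c \<in> int_lattice \<Longrightarrow> t \<in> torus \<Longrightarrow> chi c t \<in> sphere 0 1"
  by (auto simp: torus_eq chi_texp)

lemma sec_sphere: "u \<in> int_lattice \<Longrightarrow> z \<in> sphere 0 1 \<Longrightarrow> sec u z \<in> torus"
  by (metis sphere_cis sec_cis texp_torus)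

lemma continuous_chi: "continuous_on torus (chi (c :: real^'n))"
  unfolding chi_def
proof (intro continuous_on_prod continuous_on_power_int disjI2 ballI)
  fix i :: 'n
  show "continuous_on torus (\<lambda>t :: complex^'n. t $ i)" by (intro continuous_intros)
  fix t :: "complex^'n" assume "t \<in> torus"
  then have "cmod (t $ i) = 1" by (simp add: torus_def)
  then show "t $ i \<noteq> 0" by auto
qed

lemma continuous_sec: "continuous_on (sphere 0 1) (sec u)"
  unfolding sec_def
  by (intro continuous_on_vec_lambda continuous_on_power_int continuous_on_id disjI2) auto

lemma nbhd_data:
  fixes P Y :: "(real^'n) set"
  assumes P: "compact P" "convex P" and Y: "closed Y" "Y \<subseteq> P" "ANR Y"
  obtains H \<sigma> where "continuous_on ({0..1::real} \<times> P) H" "H ` ({0..1} \<times> P) \<subseteq> P"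
    "\<And>p. H (0, p) = p" "\<And>s y. s \<in> {0..1} \<Longrightarrow> y \<in> Y \<Longrightarrow> H (s, y) = y"
    "continuous_on P (\<sigma> :: real^'n \<Rightarrow> real)" "\<And>p. p \<in> P \<Longrightarrow> 0 \<le> \<sigma> p \<and> \<sigma> p \<le> 1"
    "\<And>y. y \<in> Y \<Longrightarrow> \<sigma> y = 0" "\<And>p. p \<in> P \<Longrightarrow> \<sigma> p < 1 \<Longrightarrow> H (1, p) \<in> Y"
proof (cases "Y = {}")
  case True
  show ?thesis
    by (rule that[of snd "\<lambda>p. 1::real"]) (auto simp: True intro: continuous_intros)
next
  case False
  have "closedin (top_of_set P) Y" using Y by (simp add: closed_subset)
  then obtain U where U: "openin (top_of_set P) U" "Y retract_of U"
    using ANR_imp_neighbourhood_retract[OF Y(3)] by blast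
  then obtain r0 where r0: "Y \<subseteq> U" "continuous_on U r0" "r0 \<in> U \<rightarrow> Y" "\<And>y. y \<in> Y \<Longrightarrow> r0 y = y"
    by (auto simp: retract_of_def retraction_def)
  have UP: "U \<subseteq> P" using U(1) by (rule openin_imp_subset)
  define \<rho> where "\<rho> p = setdist {p} Y" for p
  have \<rho>c: "continuous_on S \<rho>" for S unfolding \<rho>_def by (rule continuous_on_setdist)
  have \<rho>0: "\<rho> y = 0" if "y \<in> Y" for y unfolding \<rho>_def using that by (simp add: setdist_eq_0I)
  have \<rho>ge: "\<rho> p \<ge> 0" for p unfolding \<rho>_def by (simp add: setdist_pos_le)
  obtain ep where ep: "ep > 0" "\<And>p. p \<in> P \<Longrightarrow> \<rho> p < ep \<Longrightarrow> p \<in> U"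
  proof (cases "P - U = {}")
    case True
    then show ?thesis using that[of 1] by auto
  next
    case PU: False
    obtain W where W: "open W" "U = P \<inter> W" using U(1) by (auto simp: openin_open)
    have "P - U = P - W" using W by auto
    then have cl: "closed (P - U)" using W P(1) by (simp add: compact_imp_closed closed_Diff)
    have cY: "compact Y" using Y P(1) by (metis compact_Int_closed inf.absorb_iff2)
    have pos: "0 < setdist Y (P - U)"
      using setdist_gt_0_compact_closed[OF cY cl] False PU r0(1) by auto
    show ?thesis
    proof (rule that[OF pos])
      fix p assume p: "p \<in> P" "\<rho> p < setdist Y (P - U)"
      show "p \<in> U"
      proof (rule ccontr)
        assume "p \<notin> U"
        then have "setdist (P - U) Y \<le> setdist {p} Y" using p(1) by (intro setdist_subset_left) auto
        then show False using p(2) by (simp add: \<rho>_def setdist_sym)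
      qed
    qed
  qed
  define lm where "lm p = max 0 (min 1 (2 - 4 * \<rho> p / ep))" for p
  define \<sigma> where "\<sigma> p = min 1 (4 * \<rho> p / ep)" for p
  define H where "H x = (if \<rho> (snd x) \<le> ep / 2
      then (1 - fst x * lm (snd x)) *\<^sub>R snd x + (fst x * lm (snd x)) *\<^sub>R r0 (snd x) else snd x)" for x
  have lmc: "continuous_on S lm" for S unfolding lm_def using ep(1) by (intro continuous_intros \<rho>c) auto
  have lm01: "0 \<le> lm p" "lm p \<le> 1" for p by (auto simp: lm_def)
  have lm1: "lm p = 1" if "\<rho> p \<le> ep / 4" for p using that ep(1) by (auto simp: lm_def field_simps)
  have lm0: "lm p = 0" if "\<rho> p = ep / 2" for p using that ep(1) by (auto simp: lm_def field_simps)
  show ?thesis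
  proof (rule that[of H \<sigma>])
    let ?S = "{0..1::real} \<times> {p \<in> P. \<rho> p \<le> ep / 2}" and ?T = "{0..1::real} \<times> {p \<in> P. ep / 2 \<le> \<rho> p}"
    have ST: "?S \<union> ?T = {0..1} \<times> P" by auto
    have clS: "closed ?S"
    proof -
      have "{p \<in> P. \<rho> p \<le> ep / 2} = P \<inter> {p. \<rho> p \<le> ep / 2}" by auto
      moreover have "closed {p. \<rho> p \<le> ep / 2}" by (rule closed_Collect_le) (auto intro: \<rho>c continuous_intros)
      ultimately show ?thesis using P(1) by (metis closed_Times closed_atLeastAtMost closed_Int compact_imp_closed)
    qed
    have clT: "closed ?T"
    proof -
      have "{p \<in> P. ep / 2 \<le> \<rho> p} = P \<inter> {p. ep / 2 \<le> \<rho> p}" by auto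
      moreover have "closed {p. ep / 2 \<le> \<rho> p}" by (rule closed_Collect_le) (auto intro: \<rho>c continuous_intros)
      ultimately show ?thesis using P(1) by (metis closed_Times closed_atLeastAtMost closed_Int compact_imp_closed)
    qed
    have SU: "snd ` ?S \<subseteq> U" using ep by auto
    have c1: "continuous_on ?S (\<lambda>x. (1 - fst x * lm (snd x)) *\<^sub>R snd x + (fst x * lm (snd x)) *\<^sub>R r0 (snd x))"
      by (intro continuous_intros continuous_on_compose2[OF lmc] continuous_on_compose2[OF r0(2) _ SU]) auto
    have "continuous_on (?S \<union> ?T) H"
      unfolding H_def
    proof (rule continuous_on_cases_local)
      show "closedin (top_of_set (?S \<union> ?T)) ?S" by (rule closed_subset[OF _ clS]) auto
      show "closedin (top_of_set (?S \<union> ?T)) ?T" by (rule closed_subset[OF _ clT]) auto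
      show "continuous_on ?T snd" by (intro continuous_intros)
      show "continuous_on ?S (\<lambda>x. (1 - fst x * lm (snd x)) *\<^sub>R snd x + (fst x * lm (snd x)) *\<^sub>R r0 (snd x))" by (rule c1)
      fix x assume "x \<in> ?S \<and> \<not> \<rho> (snd x) \<le> ep / 2 \<or> x \<in> ?T \<and> \<rho> (snd x) \<le> ep / 2"
      then have "\<rho> (snd x) = ep / 2" by auto
      then show "(1 - fst x * lm (snd x)) *\<^sub>R snd x + (fst x * lm (snd x)) *\<^sub>R r0 (snd x) = snd x"
        using lm0 by simp
    qed
    then show "continuous_on ({0..1} \<times> P) H" using ST by simp
    show "H ` ({0..1} \<times> P) \<subseteq> P"
    proof clarify
      fix s p assume sp: "s \<in> {0..1::real}" "p \<in> P"
      show "H (s, p) \<in> P"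
      proof (cases "\<rho> p \<le> ep / 2")
        case True
        then have "p \<in> U" using ep sp by auto
        then have "r0 p \<in> P" using r0(3) Y(2) by auto
        moreover have "0 \<le> s * lm p" "s * lm p \<le> 1" using sp lm01[of p] by (auto simp: mult_le_one)
        ultimately show ?thesis using True sp P(2) by (simp add: H_def convex_alt)
      qed (use sp in \<open>simp add: H_def\<close>)
    qed
    show "H (0, p) = p" for p by (simp add: H_def)
    show "H (s, y) = y" if "s \<in> {0..1}" "y \<in> Y" for s y
      using that \<rho>0[of "y"] lm1[of y] ep(1) r0(4)[of y] by (simp add: H_def algebra_simps)
    show "continuous_on P \<sigma>" unfolding \<sigma>_def using ep(1) by (intro continuous_intros \<rho>c) auto
    show "0 \<le> \<sigma> p \<and> \<sigma> p \<le> 1" if "p \<in> P" for p using \<rho>ge[of p] ep(1) by (simp add: \<sigma>_def)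
    show "\<sigma> y = 0" if "y \<in> Y" for y using \<rho>0[OF that] by (simp add: \<sigma>_def)
    show "H (1, p) \<in> Y" if "p \<in> P" "\<sigma> p < 1" for p
    proof -
      have "4 * \<rho> p / ep < 1" using that(2) by (auto simp: \<sigma>_def min_def split: if_splits)
      then have "\<rho> p < ep / 4" using ep(1) by (simp add: field_simps)
      then have "\<rho> p \<le> ep / 2" "lm p = 1" "p \<in> U" using lm1 ep that(1) by auto
      then show ?thesis using r0(3) by (auto simp: H_def)
    qed
  qed
qed

lemma homotopic_from_map:
  assumes "continuous_map (prod_topology (top_of_set {0..1::real}) X) Y h"
    "\<And>x. x \<in> topspace X \<Longrightarrow> h (0, x) = f x" "\<And>x. x \<in> topspace X \<Longrightarrow> h (1, x) = g x"
  shows "homotopic_with (\<lambda>x. True) X Y f g"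
proof -
  have "homotopic_with (\<lambda>x. True) X Y (\<lambda>x. h (0, x)) (\<lambda>x. h (1, x))"
    unfolding homotopic_with_def using assms(1) by blast
  then show ?thesis by (rule homotopic_with_eq) (use assms in auto)
qed

lemma homotopic_from_h:
  assumes "continuous_on ({0..1::real} \<times> S) h" "h ` ({0..1} \<times> S) \<subseteq> T"
    "\<And>x. x \<in> S \<Longrightarrow> h (0, x) = f x" "\<And>x. x \<in> S \<Longrightarrow> h (1, x) = g x"
  shows "homotopic_with (\<lambda>x. True) (top_of_set S) (top_of_set T) f g"
  by (rule homotopic_from_map) (use assms in \<open>auto simp: prod_topology_subtopology_eu continuous_map_subtopology_eu\<close>)

context
  fixes P :: "(real^'n) set" and lam :: "(real^'n) set \<Rightarrow> real^'n" and V :: "(real^'n) set"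
    and c u :: "real^'n"
  assumes sp: "simple_polytope P" and cf: "characteristic_function P lam"
    and Vc: "V = {v. c \<bullet> v = 0}" and cZ: "c \<in> int_lattice" and uZ: "u \<in> int_lattice" and cu: "c \<bullet> u = 1"
begin

lemma subV: "subspace V" unfolding Vc by (rule subspace_hyperplane)

lemma polyP: "polytope P" using sp by (simp add: simple_polytope_def)

lemma Y_sub: "Y_non P lam V \<subseteq> P"
  unfolding Y_non_def by (auto dest: face_of_imp_subset)

lemma Y_union: "Y_non P lam V = \<Union>{G. G face_of P \<and> G \<noteq> {} \<and> G \<noteq> P \<and> \<not> special_face P lam V G}"
  by (simp add: Y_non_def)

lemma Y_closed: "closed (Y_non P lam V)"
proof -
  have fin: "finite {G. G face_of P \<and> G \<noteq> {} \<and> G \<noteq> P \<and> \<not> special_face P lam V G}"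
    by (rule finite_subset[OF _ finite_polytope_faces[OF polyP]]) auto
  have "closed G" if "G face_of P" for G
    using face_of_imp_closed[OF polytope_imp_convex[OF polyP] compact_imp_closed[OF polytope_imp_compact[OF polyP]] that] .
  then show ?thesis unfolding Y_union using fin by (intro closed_Union) auto
qed

lemma Y_ANR: "ANR (Y_non P lam V)"
proof -
  have fin: "finite {G. G face_of P \<and> G \<noteq> {} \<and> G \<noteq> P \<and> \<not> special_face P lam V G}"
    by (rule finite_subset[OF _ finite_polytope_faces[OF polyP]]) auto
  have "closed G" if "G face_of P" for G
    using face_of_imp_closed[OF polytope_imp_convex[OF polyP] compact_imp_closed[OF polytope_imp_compact[OF polyP]] that] .
  moreover have "convex G" if "G face_of P" for G using that face_of_imp_convex by blast
  ultimately show ?thesis unfolding Y_union using fin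
    by (intro ANR_finite_Union_convex_closed) auto
qed

lemma notY_span:
  assumes "p \<in> P" "p \<notin> Y_non P lam V"
  shows "span (lam ` facets_at P p) \<subseteq> V"
proof (rule span_minimal[OF _ subV], rule subsetI)
  fix x assume "x \<in> lam ` facets_at P p"
  then obtain F where F: "F facet_of P" "p \<in> F" "x = lam F" by (auto simp: facets_at_def)
  show "x \<in> V"
  proof (rule ccontr)
    assume "x \<notin> V"
    then have "\<not> special_face P lam V F" using F by (auto simp: special_face_def special_facet_def)
    moreover have "F face_of P" "F \<noteq> {}" "F \<noteq> P" using F(1) by (auto simp: facet_of_def)
    ultimately have "p \<in> Y_non P lam V" using F(2) unfolding Y_non_def by blast
    with assms(2) show False by simp
  qed
qed

lemma Y_decomp:
  assumes "p \<in> Y_non P lam V"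
  shows "\<exists>v\<in>V. \<exists>w\<in>span (lam ` facets_at P p). x = v + w"
proof -
  obtain G where G: "G face_of P" "p \<in> G" "\<not> special_face P lam V G"
    using assms unfolding Y_non_def by blast
  then obtain F where F: "F facet_of P" "G \<subseteq> F" "\<not> special_facet P lam V F"
    by (auto simp: special_face_def)
  have "lam F \<in> int_lattice" using cf F(1) by (simp add: characteristic_function_def)
  then have lF: "lam F \<notin> V" using F by (simp add: special_facet_def)
  then have nz: "c \<bullet> lam F \<noteq> 0" using Vc by simp
  have Ff: "F \<in> facets_at P p" using F G by (auto simp: facets_at_def)
  define w where "w = ((c \<bullet> x) / (c \<bullet> lam F)) *\<^sub>R lam F"
  have w: "w \<in> span (lam ` facets_at P p)"
    unfolding w_def using Ff by (intro span_mul span_base) auto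
  have "x - w \<in> V" using nz by (simp add: Vc w_def inner_diff_right)
  then show ?thesis using w by (intro bexI[of _ "x - w"] bexI[of _ w]) auto
qed

lemma qq_Y:
  assumes "p \<in> Y_non P lam V" "t \<in> torus" "t' \<in> torus"
  shows "qq P lam V (p, t) = qq P lam V (p, t')"
proof -
  obtain a b where ab: "t = texp a" "t' = texp b" using assms(2,3) torus_texp by metis
  obtain v w where vw: "v \<in> V" "w \<in> span (lam ` facets_at P p)" "b - a = v + w"
    using Y_decomp[OF assms(1)] by blast
  have pP: "p \<in> P" using assms(1) Y_sub by auto
  have "b = w + (v + a)" using vw(3) by (simp add: algebra_simps)
  then have "qq P lam V (p, texp b) = qq P lam V (p, texp (v + a))"
    using qq_face[OF subV pP vw(2)] by simp
  also have "\<dots> = qq P lam V (p, texp a)" using qq_orbit[OF subV pP vw(1)] .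
  finally show ?thesis using ab by simp
qed

lemma qq_inv':
  assumes "p \<in> P" "p' \<in> P" "qq P lam V (p, texp a) = qq P lam V (p', texp b)"
  obtains v w where "p' = p" "v \<in> V" "w \<in> span (lam ` facets_at P p)" "texp b = texp (w + (v + a))"
  using qq_inv[OF subV assms] by blast

lemma chi_sec: "w \<in> sphere 0 1 \<Longrightarrow> chi c (sec u w) = w"
  by (metis sphere_cis sec_cis[OF uZ] chi_texp[OF cZ] inner_scaleR_right cu mult.right_neutral)

lemma Z_closed_parts: "closed (P \<times> sphere (0::complex) 1)" "closed (Y_non P lam V \<times> cball (0::complex) 1)"
  by (rule closed_Times[OF compact_imp_closed[OF polytope_imp_compact[OF polyP]] closed_sphere],
      rule closed_Times[OF Y_closed closed_cball])

context
  fixes H :: "real \<times> (real^'n) \<Rightarrow> real^'n" and \<sigma> :: "real^'n \<Rightarrow> real"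
  assumes Hc: "continuous_on ({0..1} \<times> P) H" and HP: "H ` ({0..1} \<times> P) \<subseteq> P"
    and H0: "\<And>p. H (0, p) = p" and HY: "\<And>s y. s \<in> {0..1} \<Longrightarrow> y \<in> Y_non P lam V \<Longrightarrow> H (s, y) = y"
    and \<sigma>c: "continuous_on P \<sigma>" and \<sigma>01: "\<And>p. p \<in> P \<Longrightarrow> 0 \<le> \<sigma> p \<and> \<sigma> p \<le> 1"
    and \<sigma>Y: "\<And>y. y \<in> Y_non P lam V \<Longrightarrow> \<sigma> y = 0"
    and \<sigma>1: "\<And>p. p \<in> P \<Longrightarrow> \<sigma> p < 1 \<Longrightarrow> H (1, p) \<in> Y_non P lam V"
begin

definition "Fm x = (if snd x \<in> sphere 0 1 then qq P lam V (fst x, sec u (snd x)) else qq P lam V (fst x, texp 0))"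

definition "G0 x = (H (1, fst x), complex_of_real (\<sigma> (fst x)) * chi c (snd x))"

definition "gm W = G0 (SOME x. x \<in> topspace (top_of_set (P \<times> torus)) \<and> qq P lam V x = W)"

lemma H1P: "p \<in> P \<Longrightarrow> H (1, p) \<in> P" using HP by auto

lemma cont_qq: "continuous_map (top_of_set (P \<times> torus)) (orbit_space P lam (texp ` V)) (qq P lam V)"
  using quotient_imp_continuous_map[OF quotient_qq[OF subV]] .

lemma cont_into_Q:
  assumes "continuous_on S k" "k ` S \<subseteq> P \<times> torus"
  shows "continuous_map (top_of_set S) (orbit_space P lam (texp ` V)) (\<lambda>x. qq P lam V (k x))"
proof -
  have "continuous_map (top_of_set S) (top_of_set (P \<times> torus)) k"
    using assms by (auto simp: continuous_map_subtopology_eu)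
  from continuous_map_compose[OF this cont_qq] show ?thesis by (simp add: comp_def)
qed

lemma cont_F: "continuous_map (top_of_set (Z_non P lam V)) (orbit_space P lam (texp ` V)) Fm"
proof (rule pasting_lemma_closed[where I = "{True, False}"
      and T = "\<lambda>b. if b then P \<times> sphere 0 1 else Y_non P lam V \<times> cball 0 1"
      and f = "\<lambda>b. if b then (\<lambda>x. qq P lam V (fst x, sec u (snd x))) else (\<lambda>x. qq P lam V (fst x, texp 0))"])
  show "finite {True, False}" by simp
  have sub: "(if b then P \<times> sphere 0 1 else Y_non P lam V \<times> cball 0 1) \<subseteq> Z_non P lam V" for b
    by (auto simp: Z_non_def)
  show "closedin (top_of_set (Z_non P lam V)) (if b then P \<times> sphere 0 1 else Y_non P lam V \<times> cball 0 1)"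
    if "b \<in> {True, False}" for b
    using sub[of b] Z_closed_parts by (auto intro: closed_subset)
  show "continuous_map (subtopology (top_of_set (Z_non P lam V)) (if b then P \<times> sphere 0 1 else Y_non P lam V \<times> cball 0 1))
          (orbit_space P lam (texp ` V))
          (if b then (\<lambda>x. qq P lam V (fst x, sec u (snd x))) else (\<lambda>x. qq P lam V (fst x, texp 0)))"
    if "b \<in> {True, False}" for b
  proof -
    have e: "subtopology (top_of_set (Z_non P lam V)) (if b then P \<times> sphere 0 1 else Y_non P lam V \<times> cball 0 1)
       = top_of_set (if b then P \<times> sphere 0 1 else Y_non P lam V \<times> cball 0 1)"
      using sub[of b] by (simp add: subtopology_subtopology Int_absorb1)
    show ?thesis
    proof (cases b)
      case True
      have "continuous_on (P \<times> sphere 0 1) (\<lambda>x. (fst x, sec u (snd x)))"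
        by (intro continuous_intros continuous_on_compose2[OF continuous_sec]) auto
      moreover have "(\<lambda>x. (fst x, sec u (snd x))) ` (P \<times> sphere 0 1) \<subseteq> P \<times> torus"
        using sec_sphere[OF uZ] by auto
      ultimately show ?thesis unfolding e using True by (simp add: cont_into_Q)
    next
      case False
      have c0: "continuous_on (Y_non P lam V \<times> cball 0 1) (\<lambda>x. (fst x, texp (0::real^'n)))"
        by (intro continuous_intros)
      have i0: "(\<lambda>x. (fst x, texp (0::real^'n))) ` (Y_non P lam V \<times> cball 0 1) \<subseteq> P \<times> torus"
        using Y_sub texp_torus by auto
      from cont_into_Q[OF c0 i0] show ?thesis unfolding e using False by simp
    qed
  qed
  show "(if i then (\<lambda>x. qq P lam V (fst x, sec u (snd x))) else (\<lambda>x. qq P lam V (fst x, texp 0))) x =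
        (if j then (\<lambda>x. qq P lam V (fst x, sec u (snd x))) else (\<lambda>x. qq P lam V (fst x, texp 0))) x"
    if "i \<in> {True, False}" "j \<in> {True, False}"
       "x \<in> topspace (top_of_set (Z_non P lam V)) \<inter> (if i then P \<times> sphere 0 1 else Y_non P lam V \<times> cball 0 1)
             \<inter> (if j then P \<times> sphere 0 1 else Y_non P lam V \<times> cball 0 1)" for i j x
  proof (cases "i = j")
    case False
    then have "fst x \<in> Y_non P lam V" "snd x \<in> sphere 0 1" using that(3) by (cases i; auto)+
    then have "qq P lam V (fst x, sec u (snd x)) = qq P lam V (fst x, texp 0)"
      by (intro qq_Y sec_sphere[OF uZ] texp_torus)
    then show ?thesis by auto
  qed simp
  show "\<exists>j. j \<in> {True, False} \<and> x \<in> (if j then P \<times> sphere 0 1 else Y_non P lam V \<times> cball 0 1) \<and>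
           Fm x = (if j then (\<lambda>x. qq P lam V (fst x, sec u (snd x))) else (\<lambda>x. qq P lam V (fst x, texp 0))) x"
    if "x \<in> topspace (top_of_set (Z_non P lam V))" for x
  proof (cases "snd x \<in> sphere 0 1")
    case True
    then show ?thesis using that Y_sub by (intro exI[of _ True]) (auto simp: Fm_def Z_non_def)
  next
    case False
    then show ?thesis using that by (intro exI[of _ False]) (auto simp: Fm_def Z_non_def)
  qed
qed

lemma G0_cont: "continuous_map (top_of_set (P \<times> torus)) (top_of_set (Z_non P lam V)) G0"
  unfolding continuous_map_subtopology_eu
proof
  have "continuous_on (P \<times> torus) (\<lambda>x. H (1, fst x))"
    by (rule continuous_on_compose2[OF Hc]) (auto intro!: continuous_intros)
  moreover have "continuous_on (P \<times> torus) (\<lambda>x. \<sigma> (fst x))"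
    by (rule continuous_on_compose2[OF \<sigma>c]) (auto intro!: continuous_intros)
  moreover have "continuous_on (P \<times> torus) (\<lambda>x. chi c (snd x))"
    by (rule continuous_on_compose2[OF continuous_chi]) (auto intro!: continuous_intros)
  ultimately show "continuous_on (P \<times> torus) G0"
    unfolding G0_def by (intro continuous_intros) auto
  show "G0 \<in> P \<times> torus \<rightarrow> Z_non P lam V"
  proof
    fix x assume x: "x \<in> P \<times> (torus :: (complex^'n) set)"
    obtain p t where pt: "x = (p, t)" "p \<in> P" "t \<in> torus" using x by auto
    have n: "norm (chi c t) = 1" using chi_torus[OF cZ pt(3)] by simp
    show "G0 x \<in> Z_non P lam V"
    proof (cases "\<sigma> p < 1")
      case True
      then have "H (1, p) \<in> Y_non P lam V" using \<sigma>1 pt by auto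
      moreover have "norm (complex_of_real (\<sigma> p) * chi c t) \<le> 1"
        using \<sigma>01[OF pt(2)] n by (simp add: norm_mult)
      ultimately show ?thesis by (simp add: G0_def pt Z_non_def)
    next
      case False
      then have "\<sigma> p = 1" using \<sigma>01[OF pt(2)] by simp
      then show ?thesis using H1P[OF pt(2)] n by (simp add: G0_def pt Z_non_def)
    qed
  qed
qed

lemma G0_wd:
  assumes "x \<in> P \<times> torus" "y \<in> P \<times> torus" "qq P lam V x = qq P lam V y"
  shows "G0 x = G0 y"
proof -
  obtain p a p' b where xy: "x = (p, texp a)" "y = (p', texp b)" "p \<in> P" "p' \<in> P"
    using assms(1,2) torus_texp by (metis SigmaE)
  obtain v w where vw: "p' = p" "v \<in> V" "w \<in> span (lam ` facets_at P p)" "texp b = texp (w + (v + a))"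
    using qq_inv'[OF xy(3,4)] assms(3) xy by metis
  show ?thesis
  proof (cases "p \<in> Y_non P lam V")
    case True
    then show ?thesis using xy vw by (simp add: G0_def \<sigma>Y)
  next
    case False
    then have "w \<in> V" using notY_span[OF xy(3)] vw(3) by auto
    then have "c \<bullet> (w + (v + a)) = c \<bullet> a" using vw(2) by (simp add: Vc inner_add_right)
    then show ?thesis using xy vw by (simp add: G0_def chi_texp[OF cZ])
  qed
qed

lemma cont_g: "continuous_map (orbit_space P lam (texp ` V)) (top_of_set (Z_non P lam V)) gm"
  unfolding gm_def[abs_def]
  by (rule lift_cont(1)[OF quotient_qq[OF subV] G0_cont]) (auto intro: G0_wd)

lemma g_qq: "x \<in> P \<times> torus \<Longrightarrow> gm (qq P lam V x) = G0 x"
  unfolding gm_def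
  by (rule lift_cont(2)[OF quotient_qq[OF subV] G0_cont]) (auto intro: G0_wd)


lemma HY1: "y \<in> Y_non P lam V \<Longrightarrow> H (1, y) = y" using HY by simp

lemma cont_H1: "continuous_on S (\<lambda>x. H (1, k x))" if "continuous_on S k" "k ` S \<subseteq> P"
  by (rule continuous_on_compose2[OF Hc, where f = "\<lambda>x. (1, k x)"]) (use that in \<open>auto intro!: continuous_intros\<close>)

lemma homZ: "homotopic_with (\<lambda>x. True) (top_of_set (Z_non P lam V)) (top_of_set (Z_non P lam V)) (gm \<circ> Fm) id"
proof -
  let ?Z = "Z_non P lam V" and ?Y = "Y_non P lam V"
  let ?S = "{0..1::real} \<times> (P \<times> sphere (0::complex) 1)" and ?T = "{0..1::real} \<times> (?Y \<times> cball (0::complex) 1)"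
  have ST: "?S \<union> ?T = {0..1} \<times> ?Z" by (auto simp: Z_non_def)
  have clS: "closedin (top_of_set (?S \<union> ?T)) ?S"
    by (rule closed_subset) (auto intro!: closed_Times Z_closed_parts)
  have clT: "closedin (top_of_set (?S \<union> ?T)) ?T"
    by (rule closed_subset) (auto intro!: closed_Times Z_closed_parts)
  define K1 where "K1 x = (if snd (snd x) \<in> sphere 0 1
      then (H (1, fst (snd x)), complex_of_real ((1 - fst x) * \<sigma> (fst (snd x)) + fst x) * snd (snd x))
      else (fst (snd x), complex_of_real (fst x) * snd (snd x)))" for x :: "real \<times> ((real^'n) \<times> complex)"
  define K2 where "K2 x = (if snd (snd x) \<in> sphere 0 1
      then (H (1 - fst x, fst (snd x)), snd (snd x))
      else (fst (snd x), snd (snd x)))" for x :: "real \<times> ((real^'n) \<times> complex)"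
  have YP: "?Y \<subseteq> P" by (rule Y_sub)
  have h1: "homotopic_with (\<lambda>x. True) (top_of_set ?Z) (top_of_set ?Z) (gm \<circ> Fm) (\<lambda>x. K1 (1, x))"
  proof (rule homotopic_from_h)
    have "continuous_on (?S \<union> ?T) K1"
      unfolding K1_def
    proof (rule continuous_on_cases_local[OF clS clT])
      have "continuous_on ?S (\<lambda>x. \<sigma> (fst (snd x)))"
        by (rule continuous_on_compose2[OF \<sigma>c]) (auto intro!: continuous_intros)
      moreover have "continuous_on ?S (\<lambda>x. H (1, fst (snd x)))"
        by (rule cont_H1) (auto intro!: continuous_intros)
      ultimately show "continuous_on ?S (\<lambda>x. (H (1, fst (snd x)),
          complex_of_real ((1 - fst x) * \<sigma> (fst (snd x)) + fst x) * snd (snd x)))"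
        by (intro continuous_intros) auto
      show "continuous_on ?T (\<lambda>x. (fst (snd x), complex_of_real (fst x) * snd (snd x)))"
        by (intro continuous_intros)
      fix x assume "x \<in> ?S \<and> snd (snd x) \<notin> sphere 0 1 \<or> x \<in> ?T \<and> snd (snd x) \<in> sphere 0 1"
      then have "fst (snd x) \<in> ?Y" by auto
      then show "(H (1, fst (snd x)), complex_of_real ((1 - fst x) * \<sigma> (fst (snd x)) + fst x) * snd (snd x)) =
          (fst (snd x), complex_of_real (fst x) * snd (snd x))"
        by (simp add: HY1 \<sigma>Y)
    qed
    then show "continuous_on ({0..1} \<times> ?Z) K1" using ST by simp
    have "K1 (s, p, w) \<in> ?Z" if s: "s \<in> {0..1::real}" and pw: "(p, w) \<in> ?Z" for s p w
    proof -
      show "K1 (s, p, w) \<in> ?Z"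
      proof (cases "w \<in> sphere 0 1")
        case True
        have pP: "p \<in> P" using pw YP by (auto simp: Z_non_def)
        define k where "k = (1 - s) * \<sigma> p + s"
        have m1: "0 \<le> s * (1 - \<sigma> p)" "0 \<le> (1 - s) * (1 - \<sigma> p)" using s \<sigma>01[OF pP] by auto
        have "\<sigma> p \<le> k" "k \<le> 1" using m1 by (auto simp: k_def algebra_simps)
        show ?thesis
        proof (cases "k = 1")
          case True
          then show ?thesis using \<open>w \<in> sphere 0 1\<close> H1P[OF pP] by (simp add: K1_def k_def[symmetric] Z_non_def)
        next
          case False
          then have "\<sigma> p < 1" using \<open>\<sigma> p \<le> k\<close> \<open>k \<le> 1\<close> by simp
          then have "H (1, p) \<in> ?Y" using \<sigma>1 pP by simp
          moreover have "norm (complex_of_real k * w) \<le> 1"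
            using \<open>w \<in> sphere 0 1\<close> \<open>\<sigma> p \<le> k\<close> \<open>k \<le> 1\<close> \<sigma>01[OF pP] by (simp add: norm_mult)
          ultimately show ?thesis using \<open>w \<in> sphere 0 1\<close> by (simp add: K1_def k_def[symmetric] Z_non_def)
        qed
      next
        case False
        then have "p \<in> ?Y" "norm w \<le> 1" using pw by (auto simp: Z_non_def)
        moreover have "norm (complex_of_real s * w) \<le> 1" using s \<open>norm w \<le> 1\<close> by (simp add: norm_mult mult_le_one)
        ultimately show ?thesis using False by (simp add: K1_def Z_non_def)
      qed
    qed
    then show "K1 ` ({0..1} \<times> ?Z) \<subseteq> ?Z" by auto
    show "K1 (0, x) = (gm \<circ> Fm) x" if "x \<in> ?Z" for x
    proof -
      obtain p w where x: "x = (p, w)" by fastforce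
      show ?thesis
      proof (cases "w \<in> sphere 0 1")
        case True
        have pP: "p \<in> P" using that x YP by (auto simp: Z_non_def)
        have "(p, sec u w) \<in> P \<times> torus" using pP sec_sphere[OF uZ True] by simp
        then show ?thesis using True x by (simp add: Fm_def g_qq G0_def chi_sec K1_def)
      next
        case False
        then have pY: "p \<in> ?Y" using that x by (auto simp: Z_non_def)
        have "(p, texp 0) \<in> P \<times> torus" using pY YP texp_torus by auto
        then have e: "gm (qq P lam V (p, texp 0)) = G0 (p, texp 0)" by (rule g_qq)
        show ?thesis using False x pY by (simp add: Fm_def e G0_def K1_def HY1 \<sigma>Y)
      qed
    qed
    show "K1 (1, x) = K1 (1, x)" for x ..
  qed
  have h2: "homotopic_with (\<lambda>x. True) (top_of_set ?Z) (top_of_set ?Z) (\<lambda>x. K1 (1, x)) id"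
  proof (rule homotopic_from_h)
    have "continuous_on (?S \<union> ?T) K2"
      unfolding K2_def
    proof (rule continuous_on_cases_local[OF clS clT])
      show "continuous_on ?S (\<lambda>x. (H (1 - fst x, fst (snd x)), snd (snd x)))"
        by (intro continuous_intros continuous_on_compose2[OF Hc, where f = "\<lambda>x. (1 - fst x, fst (snd x))"]) auto
      show "continuous_on ?T (\<lambda>x. (fst (snd x), snd (snd x)))"
        by (intro continuous_intros)
      fix x assume "x \<in> ?S \<and> snd (snd x) \<notin> sphere 0 1 \<or> x \<in> ?T \<and> snd (snd x) \<in> sphere 0 1"
      then have "fst (snd x) \<in> ?Y" "1 - fst x \<in> {0..1}" by auto
      then show "(H (1 - fst x, fst (snd x)), snd (snd x)) = (fst (snd x), snd (snd x))"
        by (simp add: HY)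
    qed
    then show "continuous_on ({0..1} \<times> ?Z) K2" using ST by simp
    have "K2 (s, p, w) \<in> ?Z" if s: "s \<in> {0..1::real}" and pw: "(p, w) \<in> ?Z" for s p w
    proof -
      show "K2 (s, p, w) \<in> ?Z"
      proof (cases "w \<in> sphere 0 1")
        case True
        have pP: "p \<in> P" using pw YP by (auto simp: Z_non_def)
        have "H (1 - s, p) \<in> P" using HP pP s by auto
        then show ?thesis using True by (simp add: K2_def Z_non_def)
      qed (use pw in \<open>simp add: K2_def\<close>)
    qed
    then show "K2 ` ({0..1} \<times> ?Z) \<subseteq> ?Z" by auto
    show "K2 (0, x) = K1 (1, x)" if "x \<in> ?Z" for x by (simp add: K1_def K2_def)
    show "K2 (1, x) = id x" if "x \<in> ?Z" for x by (simp add: K2_def H0)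
  qed
  show ?thesis using homotopic_with_trans[OF h1 h2] .
qed

lemma homQ: "homotopic_with (\<lambda>x. True) (orbit_space P lam (texp ` V)) (orbit_space P lam (texp ` V)) (Fm \<circ> gm) id"
proof -
  let ?Q = "orbit_space P lam (texp ` V)" and ?Y = "Y_non P lam V"
  let ?X = "prod_topology (top_of_set {0..1::real}) (top_of_set (P \<times> (torus :: (complex^'n) set)))"
  have YP: "?Y \<subseteq> P" by (rule Y_sub)
  have qp: "quotient_map ?X (prod_topology (top_of_set {0..1::real}) ?Q) (\<lambda>(s, x). (s, qq P lam V x))"
  proof (rule quotient_map_prod_right[OF _ _ quotient_qq[OF subV]])
    show "locally_compact_space (top_of_set {0..1::real})"
      by (rule compact_imp_locally_compact_space, rule compact_space_subtopology) simp
    show "Hausdorff_space (top_of_set {0..1::real}) \<or> regular_space (top_of_set {0..1::real})"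
      by (simp add: Hausdorff_space_subtopology)
  qed
  define GL where "GL x = qq P lam V (H (fst x, fst (snd x)), snd (snd x))" for x :: "real \<times> ((real^'n) \<times> (complex^'n))"
  have X: "?X = top_of_set ({0..1} \<times> (P \<times> torus))" by (simp add: prod_topology_subtopology_eu)
  have GLc: "continuous_map ?X ?Q GL"
    unfolding X GL_def
  proof (rule cont_into_Q)
    show "continuous_on ({0..1} \<times> P \<times> torus) (\<lambda>x. (H (fst x, fst (snd x)), snd (snd x)))"
      by (intro continuous_intros continuous_on_compose2[OF Hc, where f = "\<lambda>x. (fst x, fst (snd x))"]) auto
    show "(\<lambda>x. (H (fst x, fst (snd x)), snd (snd x))) ` ({0..1} \<times> P \<times> torus) \<subseteq> P \<times> torus"
      using HP by auto
  qed
  have GLwd: "GL x = GL y" if xyX: "x \<in> topspace ?X" "y \<in> topspace ?X"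
    "(\<lambda>(s, x). (s, qq P lam V x)) x = (\<lambda>(s, x). (s, qq P lam V x)) y" for x y
  proof -
    obtain s p a s' p' b where xy: "x = (s, p, texp a)" "y = (s', p', texp b)" "p \<in> P" "p' \<in> P" "s \<in> {0..1}"
      using xyX(1,2) torus_texp unfolding X by (auto, metis)
    have ss: "s' = s" and qe: "qq P lam V (p, texp a) = qq P lam V (p', texp b)" using xyX(3) xy by auto
    obtain v w where vw: "p' = p" "v \<in> V" "w \<in> span (lam ` facets_at P p)" "texp b = texp (w + (v + a))"
      using qq_inv'[OF xy(3,4) qe] by metis
    show ?thesis
    proof (cases "p \<in> ?Y")
      case True
      then show ?thesis using xy ss qe vw(1) HY by (simp add: GL_def)
    next
      case False
      then have "w \<in> V" using notY_span[OF xy(3)] vw(3) by auto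
      then have wv: "w + v \<in> V" using vw(2) subV by (simp add: subspace_add)
      have HsP: "H (s, p) \<in> P" using HP xy by auto
      have "qq P lam V (H (s, p), texp b) = qq P lam V (H (s, p), texp ((w + v) + a))"
        using vw(4) by (simp add: add.assoc)
      also have "\<dots> = qq P lam V (H (s, p), texp a)" by (rule qq_orbit[OF subV HsP wv])
      finally show ?thesis using xy ss vw(1) by (simp add: GL_def)
    qed
  qed
  define L where "L z = GL (SOME x. x \<in> topspace ?X \<and> (\<lambda>(s, x). (s, qq P lam V x)) x = z)" for z
  have Lc: "continuous_map (prod_topology (top_of_set {0..1::real}) ?Q) ?Q L"
    unfolding L_def[abs_def] by (rule lift_cont(1)[OF qp GLc GLwd])
  have Lq: "L (s, qq P lam V x) = GL (s, x)" if "s \<in> {0..1}" "x \<in> P \<times> torus" for s x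
  proof -
    have "(s, x) \<in> topspace ?X" using that by (simp add: X)
    have e: "(\<lambda>(s, x). (s, qq P lam V x)) (s, x) = (s, qq P lam V x)" by simp
    show ?thesis unfolding L_def using lift_cont(2)[OF qp GLc GLwd \<open>(s, x) \<in> topspace ?X\<close>, unfolded e] .
  qed
  have surj: "\<exists>x \<in> P \<times> torus. W = qq P lam V x" if "W \<in> topspace ?Q" for W
  proof -
    have "W \<in> qq P lam V ` (P \<times> torus)"
      using quotient_imp_surjective_map[OF quotient_qq[OF subV, where P=P and lam=lam]] that by simp
    then show ?thesis by (metis imageE)
  qed
  have "homotopic_with (\<lambda>x. True) ?Q ?Q id (Fm \<circ> gm)"
  proof (rule homotopic_from_map[OF Lc])
    fix W assume "W \<in> topspace ?Q"
    from surj[OF this] obtain p t where pt: "p \<in> P" "t \<in> torus" "W = qq P lam V (p, t)" by auto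
    show "L (0, W) = id W" using pt Lq[of 0 "(p, t)"] by (simp add: GL_def H0)
    obtain a where ta: "t = texp a" using pt(2) torus_texp by metis
    have H1: "H (1, p) \<in> P" using H1P[OF pt(1)] .
    have n: "norm (chi c t) = 1" using chi_torus[OF cZ pt(2)] by simp
    have gW: "gm W = (H (1, p), complex_of_real (\<sigma> p) * chi c t)"
      using g_qq[of "(p, t)"] pt by (simp add: G0_def)
    have "Fm (gm W) = qq P lam V (H (1, p), t)"
    proof (cases "\<sigma> p < 1")
      case True
      then have HY': "H (1, p) \<in> ?Y" using \<sigma>1 pt by simp
      show ?thesis
      proof (cases "complex_of_real (\<sigma> p) * chi c t \<in> sphere 0 1")
        case True
        then have "Fm (gm W) = qq P lam V (H (1, p), sec u (complex_of_real (\<sigma> p) * chi c t))"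
          by (simp add: gW Fm_def)
        also have "\<dots> = qq P lam V (H (1, p), t)" by (rule qq_Y[OF HY' sec_sphere[OF uZ True] pt(2)])
        finally show ?thesis .
      next
        case False
        then have "Fm (gm W) = qq P lam V (H (1, p), texp 0)"
          by (simp add: gW Fm_def)
        also have "\<dots> = qq P lam V (H (1, p), t)" by (rule qq_Y[OF HY' texp_torus pt(2)])
        finally show ?thesis .
      qed
    next
      case False
      then have s1: "\<sigma> p = 1" using \<sigma>01[OF pt(1)] by simp
      have "sec u (chi c t) = texp ((c \<bullet> a) *\<^sub>R u)" using sec_cis[OF uZ] chi_texp[OF cZ] ta by simp
      moreover have "(c \<bullet> a) *\<^sub>R u = ((c \<bullet> a) *\<^sub>R u - a) + a" by simp
      moreover have "(c \<bullet> a) *\<^sub>R u - a \<in> V" using cu by (simp add: Vc inner_diff_right)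
      ultimately have "qq P lam V (H (1, p), sec u (chi c t)) = qq P lam V (H (1, p), t)"
        using qq_orbit[OF subV H1, where lam = lam and v = "(c \<bullet> a) *\<^sub>R u - a" and a = a] ta by simp
      moreover have "Fm (gm W) = qq P lam V (H (1, p), sec u (chi c t))"
        using s1 n by (simp add: gW Fm_def)
      ultimately show ?thesis by simp
    qed
    then show "L (1, W) = (Fm \<circ> gm) W" using pt Lq[of 1 "(p, t)"] by (simp add: GL_def)
  qed
  then show ?thesis by (rule homotopic_with_symD)
qed

lemma main_equiv: "top_of_set (Z_non P lam V) homotopy_equivalent_space orbit_space P lam (texp ` V)"
  unfolding homotopy_equivalent_space_def
  using cont_F cont_g homZ homQ by blast

end
end

theorem lemma3p2:
  fixes P :: "(real^'n) set"
    and lam :: "(real^'n) set \<Rightarrow> real^'n"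
    and V :: "(real^'n) set"
  assumes "simple_polytope P"
    and "characteristic_function P lam"
    and "rational_hyperplane V"
    and "\<forall>c \<in> topspace (quasitoric P lam). connected (qt_stabilizer (texp ` V) c)"
  shows "top_of_set (Z_non P lam V) homotopy_equivalent_space orbit_space P lam (texp ` V)"
proof -
  obtain c u where c: "c \<in> int_lattice" "u \<in> int_lattice" "c \<bullet> u = 1" "V = {v. c \<bullet> v = 0}"
    using normal_exists[OF assms(3)] by blast
  have poly: "polytope P" using assms(1) by (simp add: simple_polytope_def)
  have PP: "compact P" "convex P" using poly by (simp_all add: polytope_imp_compact polytope_imp_convex)
  note ctx = assms(1) assms(2) c(4) c(1) c(2) c(3)
  obtain H \<sigma> where H: "continuous_on ({0..1::real} \<times> P) H" "H ` ({0..1} \<times> P) \<subseteq> P"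
    "\<And>p. H (0, p) = p" "\<And>s y. s \<in> {0..1} \<Longrightarrow> y \<in> Y_non P lam V \<Longrightarrow> H (s, y) = y"
    "continuous_on P (\<sigma> :: real^'n \<Rightarrow> real)" "\<And>p. p \<in> P \<Longrightarrow> 0 \<le> \<sigma> p \<and> \<sigma> p \<le> 1"
    "\<And>y. y \<in> Y_non P lam V \<Longrightarrow> \<sigma> y = 0" "\<And>p. p \<in> P \<Longrightarrow> \<sigma> p < 1 \<Longrightarrow> H (1, p) \<in> Y_non P lam V"
    by (rule nbhd_data[OF PP Y_closed[OF ctx] Y_sub[OF ctx] Y_ANR[OF ctx]]) blast
  show ?thesis by (rule main_equiv[OF ctx H])
qed

end
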